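(* Let $N\geq 3$ and let $\Omega\subset\mathbb{R}^N$ be a smooth bounded domain. Let $p\in C^{0,\alpha}(\overline{\Omega})$ (for some $0<\alpha<1$) be non-negative, and let $f:[0,\infty)\to[0,\infty)$ be a non-decreasing function with $f\in C^{0,\alpha}_{\rm loc}[0,\infty)$, $f(0)=0$, $f>0$ on $(0,\infty)$, and $\Lambda:=\sup_{s\geq 1} f(s)/s<\infty$. Then the problem $$\Delta u+|\nabla u|=p(x)f(u)\ \text{ in }\Omega,\qquad u\geq 0\ \text{ in }\Omega,$$ has no positive large solution in $\Omega$, i.e. there is no positive (classical) solution $u$ with $u(x)\to\infty$ as $\operatorname{dist}(x,\partial\Omega)\to 0$.
   Context: A large (explosive, blow-up) solution of the problem in a bounded domain $\Omega$ is a solution $u$ with $u(x)\to\infty$ as $\operatorname{dist}(x,\partial\Omega)\to0$. *)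

theory Defs
  imports "HOL-Analysis.Analysis"
begin

definition partial :: "'n::finite \<Rightarrow> (real^'n \<Rightarrow> real) \<Rightarrow> real^'n \<Rightarrow> real" where
  "partial i g x = deriv (\<lambda>t. g (x + t *\<^sub>R axis i 1)) 0"

definition iter_partial :: "'n::finite list \<Rightarrow> (real^'n \<Rightarrow> real) \<Rightarrow> real^'n \<Rightarrow> real" where
  "iter_partial is g = foldr partial is g"

text \<open>C-infinity on an open set: all iterated partial derivatives are (Frechet)
  differentiable, hence continuous, on S.\<close>
definition smooth_on :: "(real^'n::finite) set \<Rightarrow> (real^'n \<Rightarrow> real) \<Rightarrow> bool" where
  "smooth_on S g \<longleftrightarrow> (\<forall>is. \<forall>x\<in>S. iter_partial is g differentiable (at x))"

definition grad :: "(real^'n::finite \<Rightarrow> real) \<Rightarrow> real^'n \<Rightarrow> real^'n" where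
  "grad g x = (\<chi> i. partial i g x)"

definition laplacian :: "(real^'n::finite \<Rightarrow> real) \<Rightarrow> real^'n \<Rightarrow> real" where
  "laplacian g x = (\<Sum>i\<in>UNIV. partial i (partial i g) x)"

definition C2_on :: "(real^'n::finite) set \<Rightarrow> (real^'n \<Rightarrow> real) \<Rightarrow> bool" where
  "C2_on S u \<longleftrightarrow> (\<forall>x\<in>S. u differentiable (at x)) \<and>
     (\<forall>i. \<forall>x\<in>S. partial i u differentiable (at x)) \<and>
     (\<forall>i j. continuous_on S (partial j (partial i u)))"

text \<open>Smooth bounded domain: nonempty bounded connected open set with C-infinity
  boundary, given by a global smooth defining function phi:
  Omega = {phi < 0}, boundary = {phi = 0}, grad phi nonzero on the boundary.\<close>
definition smooth_bounded_domain :: "(real^'n::finite) set \<Rightarrow> bool" where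
  "smooth_bounded_domain \<Omega> \<longleftrightarrow> open \<Omega> \<and> connected \<Omega> \<and> bounded \<Omega> \<and> \<Omega> \<noteq> {} \<and>
     (\<exists>\<phi>. smooth_on UNIV \<phi> \<and> \<Omega> = {x. \<phi> x < 0} \<and> frontier \<Omega> = {x. \<phi> x = 0} \<and>
          (\<forall>x\<in>frontier \<Omega>. grad \<phi> x \<noteq> 0))"

definition holder_on :: "real \<Rightarrow> ('a::metric_space) set \<Rightarrow> ('a \<Rightarrow> real) \<Rightarrow> bool" where
  "holder_on \<alpha> S g \<longleftrightarrow> (\<exists>C. \<forall>x\<in>S. \<forall>y\<in>S. \<bar>g x - g y\<bar> \<le> C * dist x y powr \<alpha>)"

definition loc_holder_nonneg :: "real \<Rightarrow> (real \<Rightarrow> real) \<Rightarrow> bool" where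
  "loc_holder_nonneg \<alpha> g \<longleftrightarrow> (\<forall>b\<ge>0. holder_on \<alpha> {0..b} g)"

definition large_at_boundary :: "(real^'n::finite) set \<Rightarrow> (real^'n \<Rightarrow> real) \<Rightarrow> bool" where
  "large_at_boundary \<Omega> u \<longleftrightarrow>
     (\<forall>M. \<exists>\<delta>>0. \<forall>x\<in>\<Omega>. infdist x (frontier \<Omega>) < \<delta> \<longrightarrow> u x > M)"

end

theory Submission
  imports Defs
begin

lemma min2_nonneg:
  fixes g g' :: "real \<Rightarrow> real"
  assumes e: "e > 0"
    and dg: "\<And>t. \<bar>t\<bar> < e \<Longrightarrow> (g has_real_derivative g' t) (at t)"
    and dd: "(g' has_real_derivative d) (at 0)"
    and mn: "\<And>t. \<bar>t\<bar> < e \<Longrightarrow> g 0 \<le> g t"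
  shows "d \<ge> 0"
proof (rule ccontr)
  assume "\<not> d \<ge> 0" hence dn: "d < 0" by simp
  have g0: "g' 0 = 0"
    using DERIV_local_min[OF dg[of 0] e] mn e by (auto simp: abs_minus_commute)
  obtain \<delta> where \<delta>: "\<delta> > 0" "\<And>h. h > 0 \<Longrightarrow> h < \<delta> \<Longrightarrow> g' 0 > g' (0 + h)"
    using DERIV_neg_dec_right[OF dd dn] by blast
  define t where "t = min \<delta> e / 2"
  have t: "0 < t" "t < \<delta>" "t < e" using \<delta> e by (auto simp: t_def)
  have "\<forall>x. 0 \<le> x \<and> x \<le> t \<longrightarrow> (g has_real_derivative g' x) (at x)"
    using t by (intro allI impI dg) auto
  then obtain z where z: "0 < z" "z < t" "g t - g 0 = (t - 0) * g' z"
    using MVT2[of 0 t g g'] t by blast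
  have "g' z < 0" using \<delta>(2)[of z] z t g0 by simp
  hence "t * g' z < 0" using t by (simp add: mult_pos_neg)
  hence "g t < g 0" using z by simp
  moreover have "g 0 \<le> g t" using mn[of t] t by simp
  ultimately show False by simp
qed

lemma dir_deriv:
  fixes g :: "real^'n::finite \<Rightarrow> real"
  assumes "g differentiable (at (x + t *\<^sub>R v))"
  shows "((\<lambda>s. g (x + s *\<^sub>R v)) has_real_derivative deriv (\<lambda>s. g ((x + t *\<^sub>R v) + s *\<^sub>R v)) 0) (at t)"
proof -
  obtain D where D: "(g has_derivative D) (at (x + t *\<^sub>R v))"
    using assms by (auto simp: differentiable_def)
  have lin: "linear D" using D has_derivative_linear by blast
  have "((\<lambda>s. x + s *\<^sub>R v) has_derivative (\<lambda>h. h *\<^sub>R v)) (at t)" for t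
    by (auto intro!: derivative_eq_intros)
  have c1: "((\<lambda>s. g (x + s *\<^sub>R v)) has_derivative (\<lambda>h. D (h *\<^sub>R v))) (at t)"
    by (rule has_derivative_compose[of "\<lambda>s. x + s *\<^sub>R v" _ t UNIV g, OF _ D, simplified])
       (auto intro!: derivative_eq_intros)
  have eq: "(\<lambda>h. D (h *\<^sub>R v)) = (*) (D v)"
    using linear_cmul[OF lin] by (auto simp: fun_eq_iff)
  have r1: "((\<lambda>s. g (x + s *\<^sub>R v)) has_real_derivative D v) (at t)"
    using c1 eq by (simp add: has_field_derivative_def)
  have c2: "((\<lambda>s. g ((x + t *\<^sub>R v) + s *\<^sub>R v)) has_derivative (\<lambda>h. D (h *\<^sub>R v))) (at 0)"
    by (rule has_derivative_compose[of "\<lambda>s. (x + t *\<^sub>R v) + s *\<^sub>R v" _ 0 UNIV g, simplified, OF _ D])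
       (auto intro!: derivative_eq_intros)
  have "((\<lambda>s. g ((x + t *\<^sub>R v) + s *\<^sub>R v)) has_real_derivative D v) (at 0)"
    using c2 eq by (simp add: has_field_derivative_def)
  hence "deriv (\<lambda>s. g ((x + t *\<^sub>R v) + s *\<^sub>R v)) 0 = D v" by (rule DERIV_imp_deriv)
  thus ?thesis using r1 by simp
qed


lemma exp_lin_deriv: "((\<lambda>s. exp (c * (b + s * a))) has_real_derivative c * a * exp (c * (b + t * a))) (at t)"
proof -
  have "((\<lambda>s. c * (b + s * a)) has_real_derivative c * a) (at t)"
    using DERIV_cmult[OF DERIV_add[OF DERIV_const[of b] DERIV_cmult_right[OF DERIV_ident, of a]], of c]
    by simp
  from DERIV_chain'[OF this DERIV_exp] show ?thesis by (simp add: mult.commute)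
qed

theorem theorem1:
  fixes \<Omega> :: "(real^'n::finite) set"
    and p :: "real^'n \<Rightarrow> real"
    and f :: "real \<Rightarrow> real"
    and \<alpha> :: real
  assumes "CARD('n) \<ge> 3"
    and "smooth_bounded_domain \<Omega>"
    and "0 < \<alpha>" "\<alpha> < 1"
    and "continuous_on (closure \<Omega>) p" "holder_on \<alpha> (closure \<Omega>) p"
    and "\<forall>x\<in>closure \<Omega>. p x \<ge> 0"
    and "\<forall>s\<ge>0. f s \<ge> 0"
    and "mono_on {0..} f"
    and "loc_holder_nonneg \<alpha> f"
    and "f 0 = 0"
    and "\<forall>s>0. f s > 0"
    and "bdd_above ((\<lambda>s. f s / s) ` {1..})"
  shows "\<not> (\<exists>u. C2_on \<Omega> u \<and> (\<forall>x\<in>\<Omega>. u x > 0) \<and>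
             (\<forall>x\<in>\<Omega>. laplacian u x + norm (grad u x) = p x * f (u x)) \<and>
             large_at_boundary \<Omega> u)"
proof
  assume "\<exists>u. C2_on \<Omega> u \<and> (\<forall>x\<in>\<Omega>. u x > 0) \<and>
             (\<forall>x\<in>\<Omega>. laplacian u x + norm (grad u x) = p x * f (u x)) \<and>
             large_at_boundary \<Omega> u"
  then obtain u where C2: "C2_on \<Omega> u" and upos: "\<forall>x\<in>\<Omega>. u x > 0"
    and eq: "\<forall>x\<in>\<Omega>. laplacian u x + norm (grad u x) = p x * f (u x)"
    and large: "large_at_boundary \<Omega> u" by blast
  have op: "open \<Omega>" and bd: "bounded \<Omega>" and ne: "\<Omega> \<noteq> {}"
    using assms(2) by (auto simp: smooth_bounded_domain_def)
  have udiff: "\<And>x. x \<in> \<Omega> \<Longrightarrow> u differentiable (at x)"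
    and pdiff: "\<And>i x. x \<in> \<Omega> \<Longrightarrow> partial i u differentiable (at x)"
    using C2 by (auto simp: C2_on_def)
  have "compact (closure \<Omega>)" using bd by (simp add: compact_closure)
  hence "bounded (p ` closure \<Omega>)"
    using assms(5) by (simp add: compact_continuous_image compact_imp_bounded)
  then obtain B where B: "\<forall>y\<in>p ` closure \<Omega>. \<bar>y\<bar> \<le> B" by (auto simp: bounded_real)
  define P where "P = max B 0"
  have P: "\<And>x. x \<in> \<Omega> \<Longrightarrow> p x \<le> P" "P \<ge> 0"
    using B closure_subset unfolding P_def by fastforce+
  obtain L where L: "\<And>s. s \<ge> 1 \<Longrightarrow> f s / s \<le> L"
    using assms(13) by (auto simp: bdd_above_def)
  define L' where "L' = max L 0"
  have f1: "f 1 \<ge> 0" using assms(8) by simp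
  have fb: "f s \<le> L' * s + f 1" if "s > 0" for s
  proof (cases "s \<ge> 1")
    case True
    have "f s / s \<le> L'" using L[OF True] by (simp add: L'_def)
    hence "f s \<le> L' * s" using True by (simp add: divide_le_eq)
    thus ?thesis using f1 by simp
  next
    case False
    have "f s \<le> f 1" using assms(9) False that by (auto intro: mono_onD[OF assms(9)])
    moreover have "L' * s \<ge> 0" using that by (simp add: L'_def)
    ultimately show ?thesis by simp
  qed
  define K where "K = P * L' + 1"
  define C where "C = P * f 1"
  have PL: "0 \<le> P * L'" using P(2) by (intro mult_nonneg_nonneg) (auto simp: L'_def)
  have K: "K > 0" using PL by (simp add: K_def)
  have C: "C \<ge> 0" using P(2) f1 by (simp add: C_def)
  have lapb: "laplacian u x \<le> K * u x + C" if x: "x \<in> \<Omega>" for x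
  proof -
    have ux: "u x > 0" using upos x by auto
    have fu: "f (u x) \<ge> 0" using assms(8) ux by simp
    have px: "p x \<ge> 0" using assms(7) x closure_subset by auto
    have ex: "laplacian u x + norm (grad u x) = p x * f (u x)" using eq x by blast
    have "laplacian u x \<le> p x * f (u x)" using ex norm_ge_zero[of "grad u x"] by linarith
    also have "\<dots> \<le> P * f (u x)" using P(1)[OF x] fu by (rule mult_right_mono)
    also have "\<dots> \<le> P * (L' * u x + f 1)" using fb[OF ux] P(2) by (rule mult_left_mono)
    also have "\<dots> = P * L' * u x + C" by (simp add: C_def algebra_simps)
    also have "P * L' * u x + C \<le> K * u x + C" using ux by (simp add: K_def algebra_simps)
    finally show ?thesis .
  qed
  obtain R where R: "\<And>x. x \<in> \<Omega> \<Longrightarrow> norm x \<le> R" using bd by (auto simp: bounded_iff)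
  define i0 :: 'n where "i0 = undefined"
  define c where "c = sqrt K"
  have c2: "c * c = K" using K by (simp add: c_def)
  have c0: "c \<ge> 0" using K by (simp add: c_def)
  define \<psi> where "\<psi> = (\<lambda>x::real^'n. exp (c * x $ i0))"
  have \<psi>pos: "\<psi> x > 0" for x by (simp add: \<psi>_def)
  have \<psi>b: "\<psi> x \<le> exp (c * R)" if "x \<in> \<Omega>" for x
  proof -
    have "x $ i0 \<le> R" using R[OF that] component_le_norm_cart[of x i0] by simp
    hence "c * x $ i0 \<le> c * R" using c0 by (rule mult_left_mono)
    thus ?thesis by (simp add: \<psi>_def)
  qed
  have \<psi>cont: "continuous_on A \<psi>" for A unfolding \<psi>_def by (intro continuous_intros)
  have main: "u x - n * \<psi> x \<ge> - C / K" if n: "n \<ge> 0" and x: "x \<in> \<Omega>" for n x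
  proof -
    define w where "w = (\<lambda>x. u x - n * \<psi> x)"
    obtain \<delta> where \<delta>: "\<delta> > 0" "\<And>y. y \<in> \<Omega> \<Longrightarrow> infdist y (frontier \<Omega>) < \<delta> \<Longrightarrow> u y > w x + n * exp (c * R)"
      using large unfolding large_at_boundary_def by meson
    have far: "w y > w x" if "y \<in> \<Omega>" "infdist y (frontier \<Omega>) < \<delta>" for y
    proof -
      have "n * \<psi> y \<le> n * exp (c * R)" using \<psi>b[OF that(1)] n by (rule mult_left_mono)
      thus ?thesis using \<delta>(2)[OF that] by (simp add: w_def)
    qed
    define S where "S = closure \<Omega> \<inter> {y. \<delta> \<le> infdist y (frontier \<Omega>)}"
    have SO: "S \<subseteq> \<Omega>"
    proof
      fix y assume "y \<in> S"
      hence "y \<in> closure \<Omega>" "y \<notin> frontier \<Omega>" using \<delta>(1) by (auto simp: S_def)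
      thus "y \<in> \<Omega>" using op by (simp add: frontier_def interior_open)
    qed
    have ci: "continuous_on UNIV (\<lambda>y::real^'n. infdist y (frontier \<Omega>))"
      by (rule continuous_on_infdist[OF continuous_on_id])
    have "closed {y. \<delta> \<le> infdist y (frontier \<Omega>)}"
      by (rule closed_Collect_le[OF continuous_on_const ci])
    hence "closed S" unfolding S_def by (rule closed_Int[OF closed_closure])
    moreover have "bounded S" using bounded_subset[OF bounded_closure[OF bd]] by (auto simp: S_def)
    ultimately have cS: "compact S" by (simp add: compact_eq_bounded_closed)
    have "\<not> infdist x (frontier \<Omega>) < \<delta>" using far[OF x] by auto
    hence xS: "x \<in> S" using x closure_subset unfolding S_def by auto
    have "continuous_on \<Omega> u" using udiff
      by (meson continuous_at_imp_continuous_on differentiable_imp_continuous_within)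
    hence "continuous_on S w" unfolding w_def
      by (intro continuous_intros continuous_on_subset[OF _ SO] \<psi>cont) auto
    then obtain x0 where x0: "x0 \<in> S" "\<And>y. y \<in> S \<Longrightarrow> w x0 \<le> w y"
      using continuous_attains_inf[OF cS] xS by blast
    have x0O: "x0 \<in> \<Omega>" using x0 SO by auto
    have gmin: "w x0 \<le> w y" if "y \<in> \<Omega>" for y
    proof (cases "infdist y (frontier \<Omega>) < \<delta>")
      case True thus ?thesis using far[OF that True] x0(2)[OF xS] by simp
    next
      case False thus ?thesis using x0(2)[of y] that closure_subset by (auto simp: S_def)
    qed
    obtain e where e: "e > 0" "ball x0 e \<subseteq> \<Omega>" using op x0O by (auto simp: open_contains_ball)
    have line: "x0 + t *\<^sub>R axis i 1 \<in> \<Omega>" if "\<bar>t\<bar> < e" for t i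
      using e that by (auto simp: dist_norm intro!: subsetD[OF e(2)])
    have di: "partial i (partial i u) x0 - n * K * \<psi> x0 * (if i = i0 then 1 else 0) \<ge> 0" for i
    proof -
      define a where "a = axis i (1::real) $ i0"
      have a: "a = (if i = i0 then 1 else 0)" by (auto simp: a_def axis_def)
      have aa: "a * a = a" by (simp add: a)
      have lin: "(x0 + s *\<^sub>R axis i 1) $ i0 = x0 $ i0 + s * a" for s by (simp add: a_def)
      define g where "g = (\<lambda>s. w (x0 + s *\<^sub>R axis i 1))"
      define g' where "g' = (\<lambda>s. partial i u (x0 + s *\<^sub>R axis i 1) - n * (c * a * exp (c * (x0 $ i0 + s * a))))"
      have gg: "g = (\<lambda>s. u (x0 + s *\<^sub>R axis i 1) - n * exp (c * (x0 $ i0 + s * a)))"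
        by (simp only: g_def w_def \<psi>_def lin)
      have "(g has_real_derivative g' t) (at t)" if "\<bar>t\<bar> < e" for t
      proof -
        have "((\<lambda>s. u (x0 + s *\<^sub>R axis i 1)) has_real_derivative partial i u (x0 + t *\<^sub>R axis i 1)) (at t)"
          using dir_deriv[OF udiff[OF line[OF that]]] by (simp add: partial_def)
        from DERIV_diff[OF this DERIV_cmult[OF exp_lin_deriv[of c "x0 $ i0" a t], of n]]
        show ?thesis unfolding gg g'_def .
      qed
      moreover have "(g' has_real_derivative (partial i (partial i u) x0 - n * K * \<psi> x0 * a)) (at 0)"
      proof -
        have "((\<lambda>s. partial i u (x0 + s *\<^sub>R axis i 1)) has_real_derivative partial i (partial i u) x0) (at 0)"
          using dir_deriv[of "partial i u" x0 0 "axis i 1"] pdiff[OF x0O] by (simp add: partial_def)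
        from DERIV_diff[OF this DERIV_cmult[OF DERIV_cmult[OF exp_lin_deriv[of c "x0 $ i0" a 0]], of "c * a" n]]
        have d1: "(g' has_real_derivative partial i (partial i u) x0 - n * (c * a * (c * a * exp (c * (x0 $ i0 + 0 * a))))) (at 0)"
          unfolding g'_def by (simp add: mult_ac)
        moreover have e1: "n * (c * a * (c * a * exp (c * (x0 $ i0 + 0 * a)))) = n * K * \<psi> x0 * a"
        proof -
          have "n * (c * a * (c * a * exp (c * (x0 $ i0 + 0 * a)))) = n * (c * c) * \<psi> x0 * (a * a)"
            by (simp add: \<psi>_def mult_ac)
          also have "\<dots> = n * K * \<psi> x0 * a" by (simp only: c2 aa)
          finally show ?thesis .
        qed
        ultimately show ?thesis by (rule DERIV_cong[OF _ arg_cong[where f="\<lambda>z. partial i (partial i u) x0 - z"]])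
      qed
      moreover have "g 0 \<le> g t" if "\<bar>t\<bar> < e" for t
        using gmin[OF line[OF that]] by (simp add: g_def)
      ultimately have "partial i (partial i u) x0 - n * K * \<psi> x0 * a \<ge> 0"
        using min2_nonneg[OF e(1)] by blast
      thus ?thesis by (simp add: a)
    qed
    have "0 \<le> (\<Sum>i\<in>UNIV. partial i (partial i u) x0 - n * K * \<psi> x0 * (if i = i0 then 1 else 0))"
      using di by (intro sum_nonneg) auto
    also have "\<dots> = laplacian u x0 - (\<Sum>i\<in>UNIV. n * K * \<psi> x0 * (if i = i0 then 1 else 0))"
      by (simp only: sum_subtractf laplacian_def)
    also have "\<dots> = laplacian u x0 - n * K * \<psi> x0"
      by (subst sum_distrib_left[symmetric]) simp
    finally have "n * K * \<psi> x0 \<le> K * u x0 + C" using lapb[OF x0O] by simp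
    hence "K * w x0 \<ge> - C" by (simp add: w_def algebra_simps)
    hence "(- C) / K \<le> (K * w x0) / K" using K by (intro divide_right_mono) auto
    hence "w x0 \<ge> - C / K" using K by simp
    thus ?thesis using gmin[OF x] by (simp add: w_def)
  qed
  obtain x where x: "x \<in> \<Omega>" using ne by blast
  define n where "n = (u x + C / K + 1) / \<psi> x"
  have "C / K \<ge> 0" using C K by simp
  moreover have "u x > 0" using upos x by simp
  ultimately have "n \<ge> 0" using \<psi>pos[of x] unfolding n_def by (intro divide_nonneg_pos) auto
  from main[OF this x] have "u x - n * \<psi> x \<ge> - C / K" .
  moreover have "n * \<psi> x = u x + C / K + 1" using \<psi>pos[of x] by (simp add: n_def)
  ultimately show False by simp
qed
end
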